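(* Let $\kappa\ge3$ and let $X_t$ be the walk with wall defined below. Define $P_*^{(E)}(x)=\lim_{t\to\infty}P(X_{2t}=x)$ and $P_*^{(O)}(x)=\lim_{t\to\infty}P(X_{2t+1}=x)$ for $x\in\mathbb{Z}_+$. Then these limits exist and: (1) (Case (A), $\gamma=0$) $P_*^{(E)}(x)=P_*^{(O)}(x)=0$ for all $x\ge0$. (2) (Case (B), $\gamma=\pi$) For even $x$: $P_*^{(E)}(x)=\left(\frac{\kappa-2}{\kappa-1}\right)^2\left\{\delta_0(x)+(1-\delta_0(x))\,\kappa\left(\frac{1}{\kappa-1}\right)^x\right\}$, and $P_*^{(E)}(x)=0$ for odd $x$; for odd $x$: $P_*^{(O)}(x)=\kappa\left(\frac{\kappa-2}{\kappa-1}\right)^2\left(\frac{1}{\kappa-1}\right)^x$, and $P_*^{(O)}(x)=0$ for even $x$. Here $\delta_0(x)=1$ if $x=0$ and $0$ otherwise.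
   Context: Walk with wall on $\mathbb{Z}_+=\{0,1,2,\dots\}$: fix $\kappa\ge3$, let $a_\kappa=2\sqrt{\kappa-1}/\kappa$, $b_\kappa=1-2/\kappa$, $\gamma\in\mathbb{R}$. Consider the Hilbert space with orthonormal basis $\{|0,L\rangle\}\cup\{|x,L\rangle,|x,R\rangle: x\ge1\}$ and the unitary $\widetilde U$ given by $\widetilde U|0,L\rangle=e^{i\gamma}|1,R\rangle$ and, for $x\ge1$, $\widetilde U|x,L\rangle=a_\kappa|x-1,L\rangle+b_\kappa|x+1,R\rangle$, $\widetilde U|x,R\rangle=-b_\kappa|x-1,L\rangle+a_\kappa|x+1,R\rangle$. With $\Phi_t=\widetilde U^t|0,L\rangle$, the random variable $X_t$ on $\mathbb{Z}_+$ has $P(X_t=0)=|\langle 0,L|\Phi_t\rangle|^2$ and $P(X_t=x)=|\langle x,L|\Phi_t\rangle|^2+|\langle x,R|\Phi_t\rangle|^2$ for $x\ge1$. Case (A) is $\gamma=0$ and Case (B) is $\gamma=\pi$. (These correspond to the distance from the root of the Grover walk on the $\kappa$-regular Cayley tree started at the root with uniform coin state $(1/\sqrt\kappa,\dots,1/\sqrt\kappa)$, resp. coin state $(\omega_\kappa^j/\sqrt\kappa)_{j=0}^{\kappa-1}$, $\omega_\kappa=e^{2\pi i/\kappa}$.) *)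

theory Defs
  imports Complex_Main
begin

datatype chir = L | R

definition a_k :: "nat \<Rightarrow> real" where
  "a_k \<kappa> = 2 * sqrt (real \<kappa> - 1) / real \<kappa>"

definition b_k :: "nat \<Rightarrow> real" where
  "b_k \<kappa> = 1 - 2 / real \<kappa>"

text \<open>A state is given by its coordinates psi x c = <x,c|psi>; the coordinate (0,R)
  is not a basis vector and is kept equal to 0. The unitary U~ acts on coordinates:
  U|0,L> = e^{i gamma}|1,R>, U|x,L> = a|x-1,L> + b|x+1,R>, U|x,R> = -b|x-1,L> + a|x+1,R> (x>=1).\<close>
definition wstep :: "real \<Rightarrow> nat \<Rightarrow> (nat \<Rightarrow> chir \<Rightarrow> complex) \<Rightarrow> (nat \<Rightarrow> chir \<Rightarrow> complex)" where
  "wstep \<gamma> \<kappa> \<psi> = (\<lambda>x c. case c of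
      L \<Rightarrow> complex_of_real (a_k \<kappa>) * \<psi> (Suc x) L - complex_of_real (b_k \<kappa>) * \<psi> (Suc x) R
    | R \<Rightarrow> (if x = 0 then 0
            else if x = 1 then cis \<gamma> * \<psi> 0 L
            else complex_of_real (b_k \<kappa>) * \<psi> (x - 1) L + complex_of_real (a_k \<kappa>) * \<psi> (x - 1) R))"

definition Phi :: "real \<Rightarrow> nat \<Rightarrow> nat \<Rightarrow> (nat \<Rightarrow> chir \<Rightarrow> complex)" where
  "Phi \<gamma> \<kappa> t = (wstep \<gamma> \<kappa> ^^ t) (\<lambda>x c. if x = 0 \<and> c = L then 1 else 0)"

definition Pw :: "real \<Rightarrow> nat \<Rightarrow> nat \<Rightarrow> nat \<Rightarrow> real" where
  "Pw \<gamma> \<kappa> t x = (if x = 0 then (cmod (Phi \<gamma> \<kappa> t 0 L))\<^sup>2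
                   else (cmod (Phi \<gamma> \<kappa> t x L))\<^sup>2 + (cmod (Phi \<gamma> \<kappa> t x R))\<^sup>2)"

end

theory Submission
  imports Defs "HOL-Computational_Algebra.Formal_Power_Series"
begin

notation fps_nth (infixl "\<diamondop>" 75)


definition qq :: "nat \<Rightarrow> real" where "qq n = ((1/2::real) gchoose n) * (-1)^n"

lemma qq_sum: "(\<Sum>k\<le>m. qq k) = pochhammer (1/2) m / fact m"
proof -
  have "(\<Sum>k\<le>m. qq k) = (- 1) ^ m * ((1/2::real) - 1 gchoose m)"
    unfolding qq_def by (rule gbinomial_sum_lower_neg)
  also have "\<dots> = pochhammer (1/2) m / fact m"
    by (simp add: gbinomial_pochhammer)
  finally show ?thesis .
qed

lemma qq_sum_nonneg: "(\<Sum>k\<le>m. qq k) \<ge> 0"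
  unfolding qq_sum by (intro divide_nonneg_pos pochhammer_nonneg) auto

lemma qq_neg: "k > 0 \<Longrightarrow> qq k \<le> 0"
proof -
  assume "k > 0"
  then obtain j where k: "k = Suc j" by (cases k) auto
  have "qq k = pochhammer (-1/2) k / fact k"
    unfolding qq_def by (simp add: gbinomial_pochhammer)
  also have "\<dots> = - (1/2) * pochhammer (1/2) j / fact k"
    unfolding k pochhammer_rec by simp
  also have "\<dots> \<le> 0"
    by (intro divide_nonpos_pos mult_nonpos_nonneg pochhammer_nonneg) auto
  finally show ?thesis .
qed

lemma qq0: "qq 0 = 1" by (simp add: qq_def)

lemma summable_abs_qq: "summable (\<lambda>n. \<bar>qq n\<bar>)"
proof (rule summableI_nonneg_bounded[where x=2])
  fix n
  have "(\<Sum>k<n. \<bar>qq k\<bar>) \<le> (\<Sum>k\<le>n. \<bar>qq k\<bar>)"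
    by (intro sum_mono2) auto
  also have "(\<Sum>k\<le>n. \<bar>qq k\<bar>) = 2 * qq 0 - (\<Sum>k\<le>n. qq k)"
  proof (induction n)
    case 0 then show ?case by (simp add: qq0)
  next
    case (Suc n) then show ?case using qq_neg[of "Suc n"] by simp
  qed
  also have "\<dots> \<le> 2" using qq_sum_nonneg[of n] by (simp add: qq0)
  finally show "(\<Sum>k<n. \<bar>qq k\<bar>) \<le> 2" .
qed auto


lemma gchoose_half_complex: "((1/2::complex) gchoose n) = of_real ((1/2::real) gchoose n)"
proof -
  have "((1/2::complex) gchoose n) = (- 1) ^ n * pochhammer (- of_real (1/2)) n / fact n"
    by (simp add: gbinomial_pochhammer)
  also have "\<dots> = of_real ((- 1) ^ n * pochhammer (- (1/2)) n / fact n)"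
    by (simp only: of_real_minus[symmetric] pochhammer_of_real) simp
  also have "(- 1) ^ n * pochhammer (- (1/2)) n / fact n = ((1/2::real) gchoose n)"
    by (simp add: gbinomial_pochhammer)
  finally show ?thesis .
qed

definition Sf :: "complex \<Rightarrow> complex fps" where
  "Sf w = fps_binomial (1/2) oo (fps_const (-w) * fps_X)"

lemma Sf_nth: "Sf w \<diamondop> n = of_real (qq n) * w ^ n"
proof -
  have "Sf w \<diamondop> n = (-w) ^ n * of_real ((1/2::real) gchoose n)"
    unfolding Sf_def fps_nth_compose_linear fps_binomial_nth gchoose_half_complex ..
  also have "(-w) ^ n = (-1) ^ n * w ^ n" by (rule power_minus)
  also have "(-1) ^ n * w ^ n * of_real ((1/2::real) gchoose n) = of_real (qq n) * w ^ n"
    unfolding qq_def by (simp add: mult.commute mult.left_commute)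
  finally show ?thesis .
qed

lemma Sf_sq: "Sf w ^ 2 = 1 - fps_const w * fps_X"
proof -
  have "Sf w ^ 2 = fps_binomial (1/2) ^ 2 oo (fps_const (-w) * fps_X)"
    unfolding Sf_def by (rule fps_compose_power) simp
  also have "fps_binomial (1/2::complex) ^ 2 = 1 + fps_X"
    by (simp add: fps_binomial_power fps_binomial_1)
  also have "(1 + fps_X) oo (fps_const (-w) * fps_X) = 1 + fps_const (-w) * fps_X"
    by (simp add: fps_compose_add_distrib)
  moreover have "fps_const (-w) * fps_X = - (fps_const w * fps_X)" by (simp add: fps_const_neg[symmetric] del: fps_const_neg)
  ultimately show ?thesis by simp
qed

definition Dw :: "complex \<Rightarrow> complex fps" where "Dw w = Sf w * Sf (cnj w)"

definition Dz :: "complex \<Rightarrow> complex fps" where "Dz w = Dw w oo fps_X ^ 2"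

lemma compose_X2_nth: "(f oo fps_X ^ 2) \<diamondop> n = (if even n then f \<diamondop> (n div 2) else (0::'a::comm_ring_1))"
proof -
  have "(f oo fps_X ^ 2) \<diamondop> n = (\<Sum>i=0..n. (if i = n div 2 \<and> even n then f \<diamondop> i else 0))"
    unfolding fps_compose_nth
  proof (rule sum.cong[OF refl])
    fix i assume "i \<in> {0..n}"
    have "(fps_X ^ 2) ^ i = (fps_X ^ (2 * i) :: 'a fps)" by (simp add: power_mult)
    moreover have "(n = 2 * i) = (i = n div 2 \<and> even n)" by auto
    ultimately show "f \<diamondop> i * (fps_X ^ 2) ^ i \<diamondop> n = (if i = n div 2 \<and> even n then f \<diamondop> i else 0)"
      by (simp add: fps_X_power_nth)
  qed
  also have "\<dots> = (if even n then f \<diamondop> (n div 2) else 0)"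
    by (cases "even n") (simp_all add: sum.delta')
  finally show ?thesis .
qed

lemma Dz_sq: "Dz w ^ 2 = (1 - fps_const w * fps_X ^ 2) * (1 - fps_const (cnj w) * fps_X ^ 2)"
proof -
  have "Dz w ^ 2 = Dw w ^ 2 oo fps_X ^ 2"
    unfolding Dz_def by (rule fps_compose_power) simp
  also have "Dw w ^ 2 = (1 - fps_const w * fps_X) * (1 - fps_const (cnj w) * fps_X)"
    unfolding Dw_def power_mult_distrib Sf_sq ..
  also have "\<dots> oo fps_X ^ 2 = (1 - fps_const w * fps_X ^ 2) * (1 - fps_const (cnj w) * fps_X ^ 2)"
    by (simp add: fps_compose_mult_distrib fps_compose_sub_distrib)
  finally show ?thesis .
qed

lemma Dz_nth: "Dz w \<diamondop> n = (if even n then Dw w \<diamondop> (n div 2) else 0)"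
  unfolding Dz_def by (rule compose_X2_nth)

lemma Dz_0: "Dz w \<diamondop> 0 = 1"
  by (simp add: Dz_nth Dw_def Sf_nth qq0)

lemma summable_Sf: "norm w = 1 \<Longrightarrow> summable (\<lambda>n. norm (Sf w \<diamondop> n))"
  using summable_abs_qq by (simp add: Sf_nth norm_mult norm_power)

lemma Sf_sums_sq: assumes "norm w = 1" shows "(\<Sum>n. Sf w \<diamondop> n) ^ 2 = 1 - w"
proof -
  have "(\<lambda>k. \<Sum>i\<le>k. Sf w \<diamondop> i * Sf w \<diamondop> (k - i)) sums ((\<Sum>n. Sf w \<diamondop> n) * (\<Sum>n. Sf w \<diamondop> n))"
    by (rule Cauchy_product_sums) (use summable_Sf[OF assms] in auto)
  moreover have "(\<lambda>k. \<Sum>i\<le>k. Sf w \<diamondop> i * Sf w \<diamondop> (k - i)) = (\<lambda>k. (Sf w ^ 2) \<diamondop> k)"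
    by (auto simp: power2_eq_square fps_mult_nth atLeast0AtMost)
  ultimately have "(\<lambda>k. (Sf w ^ 2) \<diamondop> k) sums ((\<Sum>n. Sf w \<diamondop> n) ^ 2)"
    by (simp only: power2_eq_square)
  then have "(\<lambda>k. (1 - fps_const w * fps_X) \<diamondop> k) sums ((\<Sum>n. Sf w \<diamondop> n) ^ 2)"
    by (simp only: Sf_sq)
  moreover have "(\<lambda>k. (1 - fps_const w * fps_X) \<diamondop> k) sums (1 - w)"
  proof -
    have "(\<lambda>k. (1 - fps_const w * fps_X) \<diamondop> k) sums (\<Sum>k\<in>{0,1}. (1 - fps_const w * fps_X) \<diamondop> k)"
      by (rule sums_finite) auto
    then show ?thesis by simp
  qed
  ultimately show ?thesis using sums_unique2 by blast
qed

lemma Dw_sums: assumes "norm w = 1" shows "(\<lambda>k. Dw w \<diamondop> k) sums (of_real (cmod (1 - w)))"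
proof -
  have "(\<lambda>k. \<Sum>i\<le>k. Sf w \<diamondop> i * Sf (cnj w) \<diamondop> (k - i)) sums ((\<Sum>n. Sf w \<diamondop> n) * (\<Sum>n. Sf (cnj w) \<diamondop> n))"
    by (rule Cauchy_product_sums) (use summable_Sf[OF assms] summable_Sf[of "cnj w"] assms in auto)
  moreover have "(\<lambda>k. \<Sum>i\<le>k. Sf w \<diamondop> i * Sf (cnj w) \<diamondop> (k - i)) = (\<lambda>k. Dw w \<diamondop> k)"
    by (auto simp: Dw_def fps_mult_nth atLeast0AtMost)
  moreover have "(\<Sum>n. Sf (cnj w) \<diamondop> n) = cnj (\<Sum>n. Sf w \<diamondop> n)"
  proof -
    have "(\<lambda>n. Sf w \<diamondop> n) sums (\<Sum>n. Sf w \<diamondop> n)" using summable_Sf[OF assms] summable_norm_cancel summable_sums by blast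
    then have "(\<lambda>n. cnj (Sf w \<diamondop> n)) sums cnj (\<Sum>n. Sf w \<diamondop> n)" by (simp add: sums_cnj)
    moreover have "(\<lambda>n. cnj (Sf w \<diamondop> n)) = (\<lambda>n. Sf (cnj w) \<diamondop> n)" by (simp add: Sf_nth fun_eq_iff)
    ultimately show ?thesis by (simp add: sums_iff)
  qed
  moreover have "(\<Sum>n. Sf w \<diamondop> n) * cnj (\<Sum>n. Sf w \<diamondop> n) = of_real (cmod (1 - w))"
  proof -
    have "(\<Sum>n. Sf w \<diamondop> n) * cnj (\<Sum>n. Sf w \<diamondop> n) = of_real ((cmod (\<Sum>n. Sf w \<diamondop> n))^2)"
      by (metis complex_norm_square of_real_power)
    also have "(cmod (\<Sum>n. Sf w \<diamondop> n))^2 = cmod ((\<Sum>n. Sf w \<diamondop> n)^2)" by (simp add: norm_power)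
    also have "\<dots> = cmod (1 - w)" using Sf_sums_sq[OF assms] by simp
    finally show ?thesis .
  qed
  ultimately show ?thesis by simp
qed


locale wfps =
  fixes a b :: real and e :: complex and D :: "complex fps"
  assumes ab: "a^2 + b^2 = 1" and a0: "a \<noteq> 0"
    and D0: "D \<diamondop> 0 = 1"
    and Dsq: "D ^ 2 = (1 + fps_X ^ 2) ^ 2 - 4 * fps_const (of_real a) ^ 2 * fps_X ^ 2"
begin

abbreviation "A \<equiv> fps_const (complex_of_real a)"
abbreviation "B \<equiv> fps_const (complex_of_real b)"
abbreviation "E \<equiv> fps_const e"
abbreviation "X \<equiv> (fps_X :: complex fps)"

lemma AB: "A * A + B * B = 1"
proof -
  have "complex_of_real a * complex_of_real a + complex_of_real b * complex_of_real b = 1"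
    using ab by (simp add: power2_eq_square flip: of_real_mult of_real_add)
  moreover have "A * A + B * B = fps_const (complex_of_real a * complex_of_real a + complex_of_real b * complex_of_real b)"
    by (simp only: fps_const_mult fps_const_add)
  ultimately show ?thesis by simp
qed

definition zeta :: "complex fps" where
  "zeta = fps_const (1 / (2 * complex_of_real a)) * fps_shift 1 (1 + X ^ 2 - D)"

lemma two_A_C: "2 * A * fps_const (1 / (2 * complex_of_real a)) = 1"
proof -
  have "2 * A * fps_const (1 / (2 * complex_of_real a)) = fps_const (2 * complex_of_real a * (1 / (2 * complex_of_real a)))"
    by (simp only: fps_numeral_fps_const fps_const_mult)
  also have "2 * complex_of_real a * (1 / (2 * complex_of_real a)) = 1" using a0 by simp
  finally show ?thesis by simp
qed

lemma zeta_eq: "2 * A * X * zeta = 1 + X ^ 2 - D"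
proof -
  have sh: "X * fps_shift 1 (1 + X ^ 2 - D) = 1 + X ^ 2 - D"
    by (rule fps_ext) (auto simp: D0 fps_X_power_nth)
  have "2 * A * X * zeta = (2 * A * fps_const (1 / (2 * complex_of_real a))) * (X * fps_shift 1 (1 + X ^ 2 - D))"
    unfolding zeta_def by (simp only: mult_ac)
  also have "\<dots> = 1 + X ^ 2 - D" by (simp only: two_A_C sh mult_1_left)
  finally show ?thesis .
qed

lemma A_ne: "4 * A * X \<noteq> 0"
proof
  assume "4 * A * X = 0"
  then have "(4 * A * X) \<diamondop> 1 = 0" by simp
  moreover have "(4 * A * X) \<diamondop> 1 = 4 * complex_of_real a"
    by (simp only: fps_numeral_fps_const fps_const_mult mult.assoc[symmetric]) simp
  ultimately show False using a0 by simp
qed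

lemma zeta_quad: "A * X * zeta ^ 2 - (1 + X ^ 2) * zeta + A * X = 0"
proof -
  have "4 * A * X * (A * X * zeta ^ 2 - (1 + X ^ 2) * zeta + A * X)
        = (2 * A * X * zeta) ^ 2 - 2 * (1 + X^2) * (2 * A * X * zeta) + 4 * A ^ 2 * X ^ 2"
    by algebra
  also have "\<dots> = (1 + X ^ 2 - D) ^ 2 - 2 * (1 + X^2) * (1 + X ^ 2 - D) + 4 * A ^ 2 * X ^ 2"
    unfolding zeta_eq ..
  also have "\<dots> = D ^ 2 - ((1 + X ^ 2) ^ 2 - 4 * A ^ 2 * X ^ 2)"
    by algebra
  also have "\<dots> = 0" using Dsq by simp
  finally have h: "4 * A * X * (A * X * zeta ^ 2 - (1 + X ^ 2) * zeta + A * X) = 0" .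
  with A_ne show ?thesis by simp
qed

definition "Nn = 1 - A * X * zeta"
definition "Dn = Nn + E * B * X ^ 2"
definition "L0 = Nn * inverse Dn"
definition "bet = E * X * L0"
definition "alp = - (B * X * zeta * bet) * inverse Nn"

lemma Nn0: "Nn \<diamondop> 0 = 1" by (simp add: Nn_def)
lemma Dn0: "Dn \<diamondop> 0 = 1" by (simp add: Dn_def Nn0 fps_X_power_nth power2_eq_square)
lemma invN: "Nn * inverse Nn = 1" by (rule inverse_mult_eq_1') (simp add: Nn0)
lemma invD: "Dn * inverse Dn = 1" by (rule inverse_mult_eq_1') (simp add: Dn0)

lemma eqI: "alp = X * zeta * (A * alp - B * bet)"
proof -
  have "alp * Nn = - (B * X * zeta * bet)"
    using invN unfolding alp_def by algebra
  then have "alp = alp * Nn + alp * (A * X * zeta)" 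
    by (simp add: Nn_def algebra_simps)
  also have "\<dots> = X * zeta * (A * alp - B * bet)" 
    using \<open>alp * Nn = - (B * X * zeta * bet)\<close> by (simp add: algebra_simps)
  finally show ?thesis .
qed

lemma eqII: "bet * zeta = X * (B * alp + A * bet)"
proof -
  have aN: "alp * Nn = - (B * X * zeta * bet)"
    using invN unfolding alp_def by algebra
  have "bet * zeta * Nn - X * (B * alp + A * bet) * Nn
      = bet * (zeta - A * X - A * X * zeta ^ 2 + (A * A + B * B) * X ^ 2 * zeta)"
    using aN unfolding Nn_def by algebra
  also have "\<dots> = - bet * (A * X * zeta ^ 2 - (1 + X ^ 2) * zeta + A * X)"
    unfolding AB by (simp add: algebra_simps)
  also have "\<dots> = 0" by (simp add: zeta_quad)
  finally have "(bet * zeta - X * (B * alp + A * bet)) * Nn = 0" by (simp add: algebra_simps)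
  then have "(bet * zeta - X * (B * alp + A * bet)) * Nn * inverse Nn = 0" by simp
  then show ?thesis using invN by (simp add: mult.assoc)
qed

lemma eqIV: "L0 = 1 + X * (A * alp - B * bet)"
proof -
  have "A * alp - B * bet = - B * bet * inverse Nn"
  proof -
    have "A * alp - B * bet = - B * bet * inverse Nn * (A * X * zeta + Nn)"
      using invN unfolding alp_def by algebra
    also have "A * X * zeta + Nn = 1" by (simp add: Nn_def)
    finally show ?thesis by simp
  qed
  then have "1 + X * (A * alp - B * bet) = 1 - E * B * X ^ 2 * (Nn * inverse Nn) * inverse Dn"
    unfolding bet_def L0_def by algebra
  also have "\<dots> = (Dn - E * B * X ^ 2) * inverse Dn"
    using invN invD by algebra
  also have "\<dots> = L0" by (simp add: Dn_def L0_def)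
  finally show ?thesis by simp
qed

lemma L0_Dn: "L0 * Dn = Nn"
  unfolding L0_def using invD by (simp add: mult.assoc mult.commute)

lemma Nn2: "2 * Nn = 1 - X ^ 2 + D"
  using zeta_eq unfolding Nn_def by (simp add: algebra_simps)

lemma alp0: "alp \<diamondop> 0 = 0" by (simp add: alp_def)
lemma bet0: "bet \<diamondop> 0 = 0" by (simp add: bet_def)
lemma L00: "L0 \<diamondop> 0 = 1" by (simp add: L0_def Nn0 Dn0 fps_inverse_def)

end


lemma ab_props:
  assumes "\<kappa> \<ge> 3"
  shows "(a_k \<kappa>)^2 + (b_k \<kappa>)^2 = 1" "a_k \<kappa> > 0" "b_k \<kappa> > 0" "b_k \<kappa> < 1"
proof -
  have k: "real \<kappa> \<ge> 3" using assms by simp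
  have s: "sqrt (real \<kappa> - 1) ^ 2 = real \<kappa> - 1" using k by simp
  show "(a_k \<kappa>)^2 + (b_k \<kappa>)^2 = 1"
    unfolding a_k_def b_k_def using k s by (simp add: field_simps power2_eq_square)
  show "a_k \<kappa> > 0" unfolding a_k_def using k by simp
  show "b_k \<kappa> > 0" unfolding b_k_def using k by (simp add: field_simps)
  show "b_k \<kappa> < 1" unfolding b_k_def using k by simp
qed

definition om :: "nat \<Rightarrow> complex" where
  "om \<kappa> = (complex_of_real (a_k \<kappa>) + \<i> * complex_of_real (b_k \<kappa>)) ^ 2"

lemma om_props:
  assumes "\<kappa> \<ge> 3"
  shows "norm (om \<kappa>) = 1" "om \<kappa> + cnj (om \<kappa>) = complex_of_real (2 * (a_k \<kappa>)^2 - 2 * (b_k \<kappa>)^2)"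
    "om \<kappa> * cnj (om \<kappa>) = 1" "cmod (1 - om \<kappa>) = 2 * b_k \<kappa>"
proof -
  note ab = ab_props[OF assms]
  define a where "a = a_k \<kappa>"
  define b where "b = b_k \<kappa>"
  have ab1: "a^2 + b^2 = 1" and bp: "b > 0" using ab by (auto simp: a_def b_def)
  have om: "om \<kappa> = Complex (a^2 - b^2) (2*a*b)"
  proof -
    have "complex_of_real a + \<i> * complex_of_real b = Complex a b" by (simp add: complex_eq_iff)
    then have "om \<kappa> = (Complex a b) ^ 2" unfolding om_def a_def b_def by simp
    also have "\<dots> = Complex (a^2 - b^2) (2*a*b)" by (simp add: power2_eq_square complex_eq_iff)
    finally show ?thesis .
  qed
  have n1: "norm (om \<kappa>) ^ 2 = 1"
  proof -
    have "norm (om \<kappa>) ^ 2 = (a^2 - b^2)^2 + (2*a*b)^2" unfolding om cmod_power2 by simp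
    also have "\<dots> = (a^2 + b^2)^2" by algebra
    finally show ?thesis using ab1 by simp
  qed
  show "norm (om \<kappa>) = 1" using n1 norm_ge_zero[of "om \<kappa>"] by (smt (verit) power2_eq_1_iff)
  show "om \<kappa> + cnj (om \<kappa>) = complex_of_real (2 * (a_k \<kappa>)^2 - 2 * (b_k \<kappa>)^2)"
    unfolding om by (simp add: complex_eq_iff a_def b_def)
  show "om \<kappa> * cnj (om \<kappa>) = 1"
    using n1 by (metis complex_norm_square of_real_1 of_real_power)
  have "cmod (1 - om \<kappa>) ^ 2 = (2 * b) ^ 2"
  proof -
    have "cmod (1 - om \<kappa>) ^ 2 = (1 - (a^2 - b^2))^2 + (2*a*b)^2"
      unfolding om cmod_power2 by simp
    also have "\<dots> = (2*b)^2 * (a^2 + b^2)"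
      using ab1 by algebra
    finally show ?thesis using ab1 by simp
  qed
  then show "cmod (1 - om \<kappa>) = 2 * b_k \<kappa>"
    using bp power2_eq_iff_nonneg[of "cmod (1 - om \<kappa>)" "2*b"] by (simp add: b_def)
qed


lemma Dsq_k:
  assumes "\<kappa> \<ge> 3"
  shows "Dz (om \<kappa>) ^ 2 = (1 + fps_X ^ 2) ^ 2 - 4 * fps_const (complex_of_real (a_k \<kappa>)) ^ 2 * fps_X ^ 2"
proof -
  note op = om_props[OF assms]
  have ab1: "(a_k \<kappa>)^2 + (b_k \<kappa>)^2 = 1" using ab_props[OF assms] by simp
  have s0: "om \<kappa> + cnj (om \<kappa>) = complex_of_real (4 * (a_k \<kappa>)^2 - 2)"
  proof -
    have r: "2 * (a_k \<kappa>)^2 - 2 * (b_k \<kappa>)^2 = 4 * (a_k \<kappa>)^2 - 2" using ab1 by simp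
    show ?thesis using op(2) unfolding r by assumption
  qed
  have s1: "fps_const (om \<kappa>) + fps_const (cnj (om \<kappa>)) = 4 * fps_const (complex_of_real (a_k \<kappa>)) ^ 2 - 2"
  proof -
    have "fps_const (om \<kappa>) + fps_const (cnj (om \<kappa>)) = fps_const (om \<kappa> + cnj (om \<kappa>))"
      by simp
    also have "\<dots> = fps_const (4 * (complex_of_real (a_k \<kappa>))^2 - 2)" unfolding s0 by simp
    also have "\<dots> = 4 * fps_const (complex_of_real (a_k \<kappa>)) ^ 2 - 2"
      by (simp add: fps_numeral_fps_const fps_const_power)
    finally show ?thesis .
  qed
  have s2: "fps_const (om \<kappa>) * fps_const (cnj (om \<kappa>)) = 1"
    using op(3) by simp
  show ?thesis unfolding Dz_sq using s1 s2 by algebra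
qed

context
  fixes \<kappa> :: nat and \<gamma> :: real
  assumes k3: "\<kappa> \<ge> 3"
begin

interpretation W: wfps "a_k \<kappa>" "b_k \<kappa>" "cis \<gamma>" "Dz (om \<kappa>)"
proof
  show "(a_k \<kappa>)\<^sup>2 + (b_k \<kappa>)\<^sup>2 = 1" "a_k \<kappa> \<noteq> 0" using ab_props[OF k3] by auto
  show "Dz (om \<kappa>) \<diamondop> 0 = 1" by (rule Dz_0)
  show "Dz (om \<kappa>) ^ 2 = (1 + fps_X ^ 2) ^ 2 - 4 * fps_const (complex_of_real (a_k \<kappa>)) ^ 2 * fps_X ^ 2"
    by (rule Dsq_k[OF k3])
qed

lemma neg_const: "fps_const (- c) * f = - (fps_const c * (f :: complex fps))"
  by (metis fps_const_neg mult_minus_left)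

lemma nth_step:
  fixes F :: "complex fps"
  assumes "F = fps_X * (fps_const c1 * G + fps_const c2 * H)"
  shows "F \<diamondop> Suc t = c1 * G \<diamondop> t + c2 * H \<diamondop> t"
  unfolding assms by (simp only: fps_X_mult_nth fps_add_nth fps_mult_left_const_nth) simp

lemma nth_step1:
  fixes F :: "complex fps"
  assumes "F = 1 + fps_X * (fps_const c1 * G + fps_const c2 * H)"
  shows "F \<diamondop> Suc t = c1 * G \<diamondop> t + c2 * H \<diamondop> t"
  unfolding assms by (simp only: fps_X_mult_nth fps_add_nth fps_mult_left_const_nth) simp

definition cand :: "nat \<Rightarrow> nat \<Rightarrow> chir \<Rightarrow> complex" where
  "cand t x c = (case c of L \<Rightarrow> (if x = 0 then W.L0 else W.alp * W.zeta ^ (x - 1)) \<diamondop> t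
                          | R \<Rightarrow> (if x = 0 then 0 else W.bet * W.zeta ^ (x - 1)) \<diamondop> t)"

lemma Phi_cand: "Phi \<gamma> \<kappa> t = cand t"
proof (induction t)
  case 0
  show ?case
    by (auto simp: fun_eq_iff Phi_def cand_def W.L00 W.alp0 W.bet0 split: chir.split)
next
  case (Suc t)
  have Phi_Suc: "Phi \<gamma> \<kappa> (Suc t) = wstep \<gamma> \<kappa> (cand t)"
    using Suc by (simp add: Phi_def)
  show ?case
  proof (rule ext, rule ext)
    fix x c
    show "Phi \<gamma> \<kappa> (Suc t) x c = cand (Suc t) x c"
    proof (cases c)
      case L
      show ?thesis
      proof (cases "x = 0")
        case True
        have "W.L0 = 1 + fps_X * (fps_const (complex_of_real (a_k \<kappa>)) * (W.alp * W.zeta ^ 0) + fps_const (- complex_of_real (b_k \<kappa>)) * (W.bet * W.zeta ^ 0))"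
          using W.eqIV by (simp add: neg_const)
        from nth_step1[OF this, of t] show ?thesis
          using True L Phi_Suc by (simp add: wstep_def cand_def)
      next
        case False
        then obtain y where x: "x = Suc y" by (cases x) auto
        have "W.alp * W.zeta ^ y = fps_X * (fps_const (complex_of_real (a_k \<kappa>)) * (W.alp * W.zeta ^ Suc y) + fps_const (- complex_of_real (b_k \<kappa>)) * (W.bet * W.zeta ^ Suc y))"
        proof -
          have "W.alp * W.zeta ^ y = (fps_X * W.zeta * (W.A * W.alp - W.B * W.bet)) * W.zeta ^ y"
            using W.eqI by (rule arg_cong[where f="\<lambda>u. u * W.zeta ^ y"])
          also have "\<dots> = fps_X * (fps_const (complex_of_real (a_k \<kappa>)) * (W.alp * W.zeta ^ Suc y) + fps_const (- complex_of_real (b_k \<kappa>)) * (W.bet * W.zeta ^ Suc y))"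
            unfolding power_Suc neg_const by (simp add: algebra_simps)
          finally show ?thesis .
        qed
        from nth_step[OF this, of t] show ?thesis
          using x L Phi_Suc by (simp add: wstep_def cand_def)
      qed
    next
      case R
      consider "x = 0" | "x = 1" | y where "x = Suc (Suc y)"
        by (metis One_nat_def not0_implies_Suc)
      then show ?thesis
      proof cases
        case 1
        then show ?thesis using R Phi_Suc by (simp add: wstep_def cand_def)
      next
        case 2
        have "W.bet * W.zeta ^ 0 = fps_X * (fps_const (cis \<gamma>) * W.L0 + fps_const 0 * W.L0)"
          unfolding W.bet_def by (simp add: mult_ac)
        from nth_step[OF this, of t] show ?thesis
          using 2 R Phi_Suc by (simp add: wstep_def cand_def)
      next
        case 3
        have "W.bet * W.zeta ^ Suc y = fps_X * (fps_const (complex_of_real (b_k \<kappa>)) * (W.alp * W.zeta ^ y) + fps_const (complex_of_real (a_k \<kappa>)) * (W.bet * W.zeta ^ y))"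
        proof -
          have "W.bet * W.zeta ^ Suc y = (W.bet * W.zeta) * W.zeta ^ y" by (simp add: mult_ac)
          also have "\<dots> = (fps_X * (W.B * W.alp + W.A * W.bet)) * W.zeta ^ y"
            using W.eqII by (rule arg_cong[where f="\<lambda>u. u * W.zeta ^ y"])
          also have "\<dots> = fps_X * (fps_const (complex_of_real (b_k \<kappa>)) * (W.alp * W.zeta ^ y) + fps_const (complex_of_real (a_k \<kappa>)) * (W.bet * W.zeta ^ y))"
            by (simp add: algebra_simps)
          finally show ?thesis .
        qed
        from nth_step[OF this, of t] show ?thesis
          using 3 R Phi_Suc by (simp add: wstep_def cand_def)
      qed
    qed
  qed
qed

lemma Phi0L: "Phi \<gamma> \<kappa> t 0 L = W.L0 \<diamondop> t"
  by (simp add: Phi_cand cand_def)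

lemma L0_rel:
  assumes "(cis \<gamma> = 1 \<and> k = 2 - 2 * complex_of_real (b_k \<kappa>) \<and> s = 1 - 2 * complex_of_real (b_k \<kappa>)) \<or>
           (cis \<gamma> = -1 \<and> k = 2 + 2 * complex_of_real (b_k \<kappa>) \<and> s = 1 + 2 * complex_of_real (b_k \<kappa>))"
  shows "W.L0 * ((1 - fps_X ^ 2) * fps_const k) = fps_const s - fps_X ^ 2 + Dz (om \<kappa>)"
proof -
  let ?D = "Dz (om \<kappa>)" and ?X = "fps_X :: complex fps"
  have K: "fps_const k = 2 - 2 * W.B \<and> fps_const s = 1 - 2 * W.B \<and> W.E = 1 \<or>
           fps_const k = 2 + 2 * W.B \<and> fps_const s = 1 + 2 * W.B \<and> W.E = -1"
  proof -
    have e1: "fps_const (x - 2 * c) = fps_const x - 2 * fps_const (c::complex)" for x c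
      by (rule fps_ext) (simp add: fps_numeral_nth)
    have e2: "fps_const (x + 2 * c) = fps_const x + 2 * fps_const (c::complex)" for x c
      by (rule fps_ext) (simp add: fps_numeral_nth)
    have e3: "fps_const (-1::complex) = -1" "fps_const (2::complex) = 2"
      by (rule fps_ext, simp add: fps_numeral_nth)+
    show ?thesis using assms by (auto simp only: e1 e2 e3 fps_const_1_eq_1)
  qed
  have D2: "?D ^ 2 = (1 + ?X ^ 2) ^ 2 - 4 * W.A ^ 2 * ?X ^ 2" by (rule Dsq_k[OF k3])
  have id2: "2 * ((fps_const s - ?X ^ 2 + ?D) * W.Dn) = 2 * (W.Nn * ((1 - ?X ^ 2) * fps_const k))"
    using K
  proof
    assume h: "fps_const k = 2 - 2 * W.B \<and> fps_const s = 1 - 2 * W.B \<and> W.E = 1"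
    show ?thesis unfolding W.Dn_def using h W.Nn2 D2 W.AB by algebra
  next
    assume h: "fps_const k = 2 + 2 * W.B \<and> fps_const s = 1 + 2 * W.B \<and> W.E = -1"
    show ?thesis unfolding W.Dn_def using h W.Nn2 D2 W.AB by algebra
  qed
  then have id: "(fps_const s - ?X ^ 2 + ?D) * W.Dn = W.Nn * ((1 - ?X ^ 2) * fps_const k)"
    by simp
  have "W.L0 * ((1 - ?X ^ 2) * fps_const k) = inverse W.Dn * (W.Nn * ((1 - ?X ^ 2) * fps_const k))"
    unfolding W.L0_def by (simp add: mult_ac)
  also have "\<dots> = inverse W.Dn * ((fps_const s - ?X ^ 2 + ?D) * W.Dn)" unfolding id ..
  also have "\<dots> = fps_const s - ?X ^ 2 + ?D" using W.invD by (simp add: mult_ac)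
  finally show ?thesis .
qed

lemma c_limits:
  assumes rel: "W.L0 * ((1 - fps_X ^ 2) * fps_const k) = fps_const s - fps_X ^ 2 + Dz (om \<kappa>)"
    and k0: "k \<noteq> 0"
  shows "(\<lambda>m. W.L0 \<diamondop> (2 * m)) \<longlonglongrightarrow> (s - 1 + 2 * complex_of_real (b_k \<kappa>)) / k"
    and "W.L0 \<diamondop> (2 * m + 1) = 0"
proof -
  let ?c = "\<lambda>n. W.L0 \<diamondop> n" and ?d = "\<lambda>j. Dw (om \<kappa>) \<diamondop> j"
  have lhs: "(W.L0 * ((1 - fps_X ^ 2) * fps_const k)) = fps_const k * W.L0 - fps_const k * (fps_X ^ 2 * W.L0)"
    by (simp add: algebra_simps)
  have co: "k * (?c n - (if n < 2 then 0 else ?c (n - 2))) =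
       (if n = 0 then s else 0) - (if n = 2 then 1 else 0) + (if even n then ?d (n div 2) else 0)" for n
  proof -
    have "(W.L0 * ((1 - fps_X ^ 2) * fps_const k)) \<diamondop> n = k * (?c n - (if n < 2 then 0 else ?c (n - 2)))"
      unfolding lhs by (simp add: fps_X_power_mult_nth algebra_simps)
    moreover have "(fps_const s - fps_X ^ 2 + Dz (om \<kappa>)) \<diamondop> n =
       (if n = 0 then s else 0) - (if n = 2 then 1 else 0) + (if even n then ?d (n div 2) else 0)"
      by (simp add: Dz_nth fps_X_power_nth)
    ultimately show ?thesis using rel by simp
  qed
  have ev: "k * ?c (2 * m) = s - (if m = 0 then 0 else 1) + (\<Sum>j\<le>m. ?d j)" for m
  proof (induction m)
    case 0 then show ?case using co[of 0] by simp
  next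
    case (Suc m)
    have "k * (?c (2 * Suc m) - ?c (2 * m)) = - (if m = 0 then 1 else 0) + ?d (Suc m)"
      using co[of "2 * Suc m"] by simp
    then show ?case using Suc by (cases "m = 0") (simp_all add: algebra_simps)
  qed
  have od: "k * ?c (2 * m + 1) = 0" for m
  proof (induction m)
    case 0 then show ?case using co[of 1] by simp
  next
    case (Suc m)
    have "k * (?c (2 * Suc m + 1) - ?c (2 * m + 1)) = 0"
      using co[of "2 * Suc m + 1"] by simp
    then show ?case using Suc by (simp add: algebra_simps) metis
  qed
  then show "W.L0 \<diamondop> (2 * m + 1) = 0" using k0 by simp
  have sums: "?d sums complex_of_real (2 * b_k \<kappa>)"
    using Dw_sums[OF om_props(1)[OF k3]] om_props(4)[OF k3] by simp
  then have "(\<lambda>m. \<Sum>j<Suc m. ?d j) \<longlonglongrightarrow> complex_of_real (2 * b_k \<kappa>)"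
    unfolding sums_def by (rule LIMSEQ_Suc)
  then have lim1: "(\<lambda>m. \<Sum>j\<le>Suc m. ?d j) \<longlonglongrightarrow> complex_of_real (2 * b_k \<kappa>)"
  proof -
    from \<open>(\<lambda>m. \<Sum>j<Suc m. ?d j) \<longlonglongrightarrow> _\<close>
    have "(\<lambda>m. \<Sum>j\<le>m. ?d j) \<longlonglongrightarrow> complex_of_real (2 * b_k \<kappa>)"
      by (simp only: lessThan_Suc_atMost)
    then show ?thesis by (rule LIMSEQ_Suc)
  qed
  have "(\<lambda>m. (s - 1 + (\<Sum>j\<le>Suc m. ?d j)) / k) \<longlonglongrightarrow> (s - 1 + complex_of_real (2 * b_k \<kappa>)) / k"
    using k0 by (intro tendsto_intros lim1)
  moreover have "(\<lambda>m. (s - 1 + (\<Sum>j\<le>Suc m. ?d j)) / k) = (\<lambda>m. ?c (2 * Suc m))"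
  proof
    fix m show "(s - 1 + (\<Sum>j\<le>Suc m. ?d j)) / k = ?c (2 * Suc m)"
      using ev[of "Suc m"] k0 by (simp add: field_simps)
  qed
  ultimately have "(\<lambda>m. ?c (2 * Suc m)) \<longlonglongrightarrow> (s - 1 + complex_of_real (2 * b_k \<kappa>)) / k" by simp
  then have "(\<lambda>m. (\<lambda>m. W.L0 \<diamondop> (2 * m)) (Suc m)) \<longlonglongrightarrow> (s - 1 + 2 * complex_of_real (b_k \<kappa>)) / k"
    by (simp only: of_real_mult of_real_numeral)
  then show "(\<lambda>m. W.L0 \<diamondop> (2 * m)) \<longlonglongrightarrow> (s - 1 + 2 * complex_of_real (b_k \<kappa>)) / k"
    by (rule LIMSEQ_imp_Suc)
qed

lemma c0_lim:
  assumes "cis \<gamma> = 1 \<and> \<Lambda> = 0 \<or> cis \<gamma> = -1 \<and> \<Lambda> = complex_of_real ((real \<kappa> - 2) / (real \<kappa> - 1))"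
  shows "(\<lambda>m. Phi \<gamma> \<kappa> (2 * m) 0 L) \<longlonglongrightarrow> \<Lambda>" "(\<lambda>m. Phi \<gamma> \<kappa> (2 * m + 1) 0 L) \<longlonglongrightarrow> 0"
proof -
  note ab = ab_props[OF k3]
  define b where "b = b_k \<kappa>"
  have b0: "b > 0" "b < 1" using ab by (auto simp: b_def)
  obtain k s where ks: "(cis \<gamma> = 1 \<and> k = 2 - 2 * complex_of_real b \<and> s = 1 - 2 * complex_of_real b) \<or>
           (cis \<gamma> = -1 \<and> k = 2 + 2 * complex_of_real b \<and> s = 1 + 2 * complex_of_real b)"
    and lim: "(s - 1 + 2 * complex_of_real b) / k = \<Lambda>" and k0: "k \<noteq> 0"
  proof (cases "cis \<gamma> = 1 \<and> \<Lambda> = 0")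
    case True
    have "2 - 2 * complex_of_real b \<noteq> 0"
    proof
      assume "2 - 2 * complex_of_real b = 0"
      then have "complex_of_real (2 - 2 * b) = 0" by simp
      then have "2 + 2 * b = 0 \<or> 2 - 2 * b = 0" by (simp only: of_real_eq_0_iff simp_thms)
      then show False using b0 by auto
    qed
    then show ?thesis using that[of "2 - 2 * complex_of_real b" "1 - 2 * complex_of_real b"] True by simp
  next
    case False
    then have h: "cis \<gamma> = -1" "\<Lambda> = complex_of_real ((real \<kappa> - 2) / (real \<kappa> - 1))" using assms by auto
    have nz: "2 + 2 * complex_of_real b \<noteq> 0"
    proof
      assume "2 + 2 * complex_of_real b = 0"
      then have "complex_of_real (2 + 2 * b) = 0" by simp
      then have "2 + 2 * b = 0 \<or> 2 - 2 * b = 0" by (simp only: of_real_eq_0_iff simp_thms)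
      then show False using b0 by auto
    qed
    have r: "(2 * b + 2 * b) / (2 + 2 * b) = (real \<kappa> - 2) / (real \<kappa> - 1)"
    proof -
      have k: "real \<kappa> \<ge> 3" using k3 by simp
      then show ?thesis unfolding b_def b_k_def by (simp add: field_simps)
    qed
    have "(1 + 2 * complex_of_real b - 1 + 2 * complex_of_real b) / (2 + 2 * complex_of_real b) = \<Lambda>"
      unfolding h(2) r[symmetric] by simp
    then show ?thesis using that[of "2 + 2 * complex_of_real b" "1 + 2 * complex_of_real b"] h nz by simp
  qed
  have rel: "W.L0 * ((1 - fps_X ^ 2) * fps_const k) = fps_const s - fps_X ^ 2 + Dz (om \<kappa>)"
    by (rule L0_rel) (use ks in \<open>simp add: b_def\<close>)
  show "(\<lambda>m. Phi \<gamma> \<kappa> (2 * m) 0 L) \<longlonglongrightarrow> \<Lambda>"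
    using c_limits(1)[OF rel k0] lim by (simp add: Phi0L b_def)
  show "(\<lambda>m. Phi \<gamma> \<kappa> (2 * m + 1) 0 L) \<longlonglongrightarrow> 0"
    using c_limits(2)[OF rel k0] by (simp add: Phi0L)
qed

end


lemma propagate:
  fixes \<psi> :: "nat \<Rightarrow> nat \<Rightarrow> chir \<Rightarrow> complex" and a b r :: real and e \<Lambda> :: complex
  assumes R1: "\<And>t. \<psi> (Suc t) 1 R = e * \<psi> t 0 L"
    and R2: "\<And>t x. x \<ge> 1 \<Longrightarrow> \<psi> (Suc t) (Suc x) R = of_real b * \<psi> t x L + of_real a * \<psi> t x R"
    and R3: "\<And>t x. \<psi> (Suc t) x L = of_real a * \<psi> t (Suc x) L - of_real b * \<psi> t (Suc x) R"
    and a0: "a \<noteq> 0" and rdef: "r * a = 1 - b" and ab: "a^2 + b^2 = 1"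
    and e: "e * \<Lambda> = - \<Lambda>"
    and c0: "(\<lambda>t. \<psi> (2 * t) 0 L) \<longlonglongrightarrow> \<Lambda>" and c1: "(\<lambda>t. \<psi> (2 * t + 1) 0 L) \<longlonglongrightarrow> 0"
    and r0: "\<And>t. \<psi> t 0 R = 0"
  shows "(\<lambda>t. \<psi> (2 * t + x) x L) \<longlonglongrightarrow> \<Lambda> * of_real r ^ x
       \<and> (\<lambda>t. \<psi> (2 * t + x) x R) \<longlonglongrightarrow> (if x = 0 then 0 else - \<Lambda> * of_real r ^ (x - 1))
       \<and> (\<lambda>t. \<psi> (2 * t + x + 1) x L) \<longlonglongrightarrow> 0
       \<and> (\<lambda>t. \<psi> (2 * t + x + 1) x R) \<longlonglongrightarrow> 0"
proof (induction x)
  case 0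
  then show ?case using c0 c1 r0 by simp
next
  case (Suc x)
  from Suc.IH have IL: "(\<lambda>t. \<psi> (2 * t + x) x L) \<longlonglongrightarrow> \<Lambda> * of_real r ^ x"
    and IR: "(\<lambda>t. \<psi> (2 * t + x) x R) \<longlonglongrightarrow> (if x = 0 then 0 else - \<Lambda> * of_real r ^ (x - 1))"
    and JL: "(\<lambda>t. \<psi> (2 * t + x + 1) x L) \<longlonglongrightarrow> 0"
    and JR: "(\<lambda>t. \<psi> (2 * t + x + 1) x R) \<longlonglongrightarrow> 0" by auto
  have a0': "complex_of_real a \<noteq> 0" using a0 by simp
  have AR: "(\<lambda>t. \<psi> (2 * t + Suc x) (Suc x) R) \<longlonglongrightarrow> - \<Lambda> * of_real r ^ x"
  proof (cases "x = 0")
    case True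
    have "(\<lambda>t. e * \<psi> (2 * t) 0 L) \<longlonglongrightarrow> e * \<Lambda>" by (intro tendsto_intros c0)
    then show ?thesis using True R1 e by simp
  next
    case False
    have "(\<lambda>t. of_real b * \<psi> (2 * t + x) x L + of_real a * \<psi> (2 * t + x) x R) \<longlonglongrightarrow>
          of_real b * (\<Lambda> * of_real r ^ x) + of_real a * (- \<Lambda> * of_real r ^ (x - 1))"
      using IL IR False by (intro tendsto_intros) auto
    moreover have "of_real b * (\<Lambda> * of_real r ^ x) + of_real a * (- \<Lambda> * of_real r ^ (x - 1)) = - \<Lambda> * of_real r ^ x"
    proof -
      obtain y where x: "x = Suc y" using False by (cases x) auto
      have ra: "r * (1 + b) = a"
      proof -
        have "r * (1 + b) * a = (r * a) * (1 + b)" by simp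
        also have "\<dots> = (1 - b) * (1 + b)" by (simp only: rdef)
        also have "\<dots> = a * a" using ab by (simp add: power2_eq_square algebra_simps)
        finally show ?thesis using a0 by simp
      qed
      have rr: "b * r - a = - r" using ra by (simp add: algebra_simps)
      have cr: "complex_of_real b * complex_of_real r - complex_of_real a = - complex_of_real r"
        using arg_cong[OF rr, of complex_of_real] by simp
      have "of_real b * (\<Lambda> * of_real r ^ x) + of_real a * (- \<Lambda> * of_real r ^ (x - 1))
          = \<Lambda> * of_real r ^ y * (complex_of_real b * complex_of_real r - complex_of_real a)"
        unfolding x by (simp add: algebra_simps)
      also have "\<dots> = - \<Lambda> * of_real r ^ x" unfolding cr x by (simp add: algebra_simps)
      finally show ?thesis .
    qed
    ultimately show ?thesis using R2 False by simp
  qed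
  have AL: "(\<lambda>t. \<psi> (2 * t + Suc x) (Suc x) L) \<longlonglongrightarrow> \<Lambda> * of_real r ^ Suc x"
  proof -
    have eq: "\<psi> (2 * t + Suc x) (Suc x) L = (\<psi> (2 * Suc t + x) x L + of_real b * \<psi> (2 * t + Suc x) (Suc x) R) / of_real a" for t
    proof -
      have "\<psi> (2 * Suc t + x) x L = \<psi> (Suc (2 * t + Suc x)) x L" by simp
      also have "\<dots> = of_real a * \<psi> (2 * t + Suc x) (Suc x) L - of_real b * \<psi> (2 * t + Suc x) (Suc x) R"
        by (rule R3)
      finally show ?thesis using a0' by (simp add: field_simps)
    qed
    have "(\<lambda>t. \<psi> (2 * Suc t + x) x L) \<longlonglongrightarrow> \<Lambda> * of_real r ^ x"
      using LIMSEQ_Suc[OF IL] by simp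
    then have "(\<lambda>t. (\<psi> (2 * Suc t + x) x L + of_real b * \<psi> (2 * t + Suc x) (Suc x) R) / of_real a) \<longlonglongrightarrow>
        (\<Lambda> * of_real r ^ x + of_real b * (- \<Lambda> * of_real r ^ x)) / of_real a"
      using AR a0' by (intro tendsto_intros) auto
    moreover have "(\<Lambda> * of_real r ^ x + of_real b * (- \<Lambda> * of_real r ^ x)) / of_real a = \<Lambda> * of_real r ^ Suc x"
    proof -
      have "r = (1 - b) / a" using rdef a0 by (simp add: field_simps)
      then have cr: "complex_of_real r = (1 - complex_of_real b) / complex_of_real a" by simp
      have "(\<Lambda> * of_real r ^ x + of_real b * (- \<Lambda> * of_real r ^ x)) / of_real a = \<Lambda> * of_real r ^ x * ((1 - complex_of_real b) / complex_of_real a)"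
        by (simp add: algebra_simps diff_divide_distrib)
      then show ?thesis unfolding cr[symmetric] by simp
    qed
    ultimately show ?thesis unfolding eq by simp
  qed
  have IR': "(\<lambda>t. \<psi> (2 * t + Suc x + 1) (Suc x) R) \<longlonglongrightarrow> 0"
  proof (cases "x = 0")
    case True
    have "(\<lambda>t. e * \<psi> (2 * t + 1) 0 L) \<longlonglongrightarrow> e * 0" by (intro tendsto_intros c1)
    then show ?thesis using True R1 by simp
  next
    case False
    have "(\<lambda>t. of_real b * \<psi> (2 * t + x + 1) x L + of_real a * \<psi> (2 * t + x + 1) x R) \<longlonglongrightarrow>
          of_real b * 0 + of_real a * 0"
      using JL JR by (intro tendsto_intros)
    then show ?thesis using R2 False by simp
  qed
  have IL': "(\<lambda>t. \<psi> (2 * t + Suc x + 1) (Suc x) L) \<longlonglongrightarrow> 0"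
  proof -
    have eq: "\<psi> (2 * t + Suc x + 1) (Suc x) L = (\<psi> (2 * Suc t + x + 1) x L + of_real b * \<psi> (2 * t + Suc x + 1) (Suc x) R) / of_real a" for t
    proof -
      have "\<psi> (2 * Suc t + x + 1) x L = \<psi> (Suc (2 * t + Suc x + 1)) x L" by simp
      also have "\<dots> = of_real a * \<psi> (2 * t + Suc x + 1) (Suc x) L - of_real b * \<psi> (2 * t + Suc x + 1) (Suc x) R"
        by (rule R3)
      finally show ?thesis using a0' by (simp add: field_simps)
    qed
    have "(\<lambda>t. \<psi> (2 * Suc t + x + 1) x L) \<longlonglongrightarrow> 0"
      using LIMSEQ_Suc[OF JL] by simp
    then have "(\<lambda>t. (\<psi> (2 * Suc t + x + 1) x L + of_real b * \<psi> (2 * t + Suc x + 1) (Suc x) R) / of_real a) \<longlonglongrightarrow>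
        (0 + of_real b * 0) / of_real a"
      using IR' a0 by (intro tendsto_intros) auto
    then show ?thesis unfolding eq by simp
  qed
  show ?case using AL AR IL' IR' by simp
qed


context
  fixes \<kappa> :: nat and \<gamma> :: real
  assumes k3: "\<kappa> \<ge> 3"
begin

lemma Phi_Suc: "Phi \<gamma> \<kappa> (Suc t) = wstep \<gamma> \<kappa> (Phi \<gamma> \<kappa> t)"
  by (simp add: Phi_def)

lemma R1: "Phi \<gamma> \<kappa> (Suc t) 1 R = cis \<gamma> * Phi \<gamma> \<kappa> t 0 L"
  by (simp add: Phi_Suc wstep_def)

lemma R2: "x \<ge> 1 \<Longrightarrow> Phi \<gamma> \<kappa> (Suc t) (Suc x) R = of_real (b_k \<kappa>) * Phi \<gamma> \<kappa> t x L + of_real (a_k \<kappa>) * Phi \<gamma> \<kappa> t x R"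
  by (simp add: Phi_Suc wstep_def)

lemma R3: "Phi \<gamma> \<kappa> (Suc t) x L = of_real (a_k \<kappa>) * Phi \<gamma> \<kappa> t (Suc x) L - of_real (b_k \<kappa>) * Phi \<gamma> \<kappa> t (Suc x) R"
  by (simp add: Phi_Suc wstep_def)

lemma r0: "Phi \<gamma> \<kappa> t 0 R = 0"
  by (cases t) (simp_all add: Phi_Suc wstep_def, simp add: Phi_def)

definition "rr = (1 - b_k \<kappa>) / a_k \<kappa>"

lemma rr_sq: "rr ^ 2 = 1 / (real \<kappa> - 1)"
proof -
  have k: "real \<kappa> \<ge> 3" using k3 by simp
  have s: "sqrt (real \<kappa> - 1) ^ 2 = real \<kappa> - 1" using k by simp
  have "rr ^ 2 = (2 / real \<kappa>) ^ 2 / (2 * sqrt (real \<kappa> - 1) / real \<kappa>) ^ 2"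
    unfolding rr_def a_k_def b_k_def by (simp add: power_divide)
  also have "\<dots> = 1 / (real \<kappa> - 1)"
    unfolding power_divide power_mult_distrib s using k by (simp add: field_simps)
  finally show ?thesis .
qed

lemma lims:
  assumes h: "cis \<gamma> = 1 \<and> \<Lambda> = 0 \<or> cis \<gamma> = -1 \<and> \<Lambda> = (real \<kappa> - 2) / (real \<kappa> - 1)"
  defines "V \<equiv> \<lambda>x. if x = 0 then \<Lambda>^2 else \<Lambda>^2 * ((rr^2)^x + (rr^2)^(x-1))"
  shows "(\<lambda>t. Pw \<gamma> \<kappa> (2 * t) x) \<longlonglongrightarrow> (if even x then V x else 0)
       \<and> (\<lambda>t. Pw \<gamma> \<kappa> (2 * t + 1) x) \<longlonglongrightarrow> (if odd x then V x else 0)"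
proof -
  note ab = ab_props[OF k3]
  have h': "cis \<gamma> = 1 \<and> complex_of_real \<Lambda> = 0 \<or> cis \<gamma> = -1 \<and> complex_of_real \<Lambda> = complex_of_real ((real \<kappa> - 2) / (real \<kappa> - 1))"
    using h by auto
  have P: "(\<lambda>t. Phi \<gamma> \<kappa> (2 * t + x) x L) \<longlonglongrightarrow> of_real \<Lambda> * of_real rr ^ x
       \<and> (\<lambda>t. Phi \<gamma> \<kappa> (2 * t + x) x R) \<longlonglongrightarrow> (if x = 0 then 0 else - of_real \<Lambda> * of_real rr ^ (x - 1))
       \<and> (\<lambda>t. Phi \<gamma> \<kappa> (2 * t + x + 1) x L) \<longlonglongrightarrow> 0
       \<and> (\<lambda>t. Phi \<gamma> \<kappa> (2 * t + x + 1) x R) \<longlonglongrightarrow> 0"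
  proof (rule propagate[where e = "cis \<gamma>" and a = "a_k \<kappa>" and b = "b_k \<kappa>"])
    show "\<And>t. Phi \<gamma> \<kappa> (Suc t) 1 R = cis \<gamma> * Phi \<gamma> \<kappa> t 0 L" by (rule R1)
    show "\<And>t x. 1 \<le> x \<Longrightarrow> Phi \<gamma> \<kappa> (Suc t) (Suc x) R = of_real (b_k \<kappa>) * Phi \<gamma> \<kappa> t x L + of_real (a_k \<kappa>) * Phi \<gamma> \<kappa> t x R"
      by (rule R2)
    show "\<And>t x. Phi \<gamma> \<kappa> (Suc t) x L = of_real (a_k \<kappa>) * Phi \<gamma> \<kappa> t (Suc x) L - of_real (b_k \<kappa>) * Phi \<gamma> \<kappa> t (Suc x) R"
      by (rule R3)
    show "a_k \<kappa> \<noteq> 0" using ab by simp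
    show "rr * a_k \<kappa> = 1 - b_k \<kappa>" using ab by (simp add: rr_def)
    show "(a_k \<kappa>)\<^sup>2 + (b_k \<kappa>)\<^sup>2 = 1" using ab by simp
    show "cis \<gamma> * complex_of_real \<Lambda> = - complex_of_real \<Lambda>" 
    proof -
      have "cis \<gamma> = 1 \<and> \<Lambda> = 0 \<or> cis \<gamma> = -1" using h by blast
      then show ?thesis by auto
    qed
    show "(\<lambda>t. Phi \<gamma> \<kappa> (2 * t) 0 L) \<longlonglongrightarrow> complex_of_real \<Lambda>" by (rule c0_lim(1)[OF k3 h'])
    show "(\<lambda>t. Phi \<gamma> \<kappa> (2 * t + 1) 0 L) \<longlonglongrightarrow> 0" by (rule c0_lim(2)[OF k3 h'])
    show "\<And>t. Phi \<gamma> \<kappa> t 0 R = 0" by (rule r0)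
  qed
  have nsq: "(cmod (complex_of_real \<Lambda> * complex_of_real rr ^ n))^2 = \<Lambda>^2 * (rr^2)^n" for n
  proof -
    have pc: "(y ^ n) ^ 2 = (y ^ 2) ^ n" for y :: real by (metis power_mult mult.commute)
    have "cmod (complex_of_real \<Lambda> * complex_of_real rr ^ n) = \<bar>\<Lambda>\<bar> * \<bar>rr\<bar> ^ n"
      by (simp add: norm_mult norm_power)
    then show ?thesis by (simp only: power_mult_distrib pc power2_abs)
  qed
  have act: "(\<lambda>t. Pw \<gamma> \<kappa> (2 * t + x) x) \<longlonglongrightarrow> V x"
  proof (cases "x = 0")
    case True
    have "(\<lambda>t. (cmod (Phi \<gamma> \<kappa> (2 * t + x) x L))^2) \<longlonglongrightarrow> (cmod (complex_of_real \<Lambda> * complex_of_real rr ^ x))^2"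
      using P by (intro tendsto_intros) auto
    then show ?thesis using True nsq[of 0] by (simp add: Pw_def V_def)
  next
    case False
    have "(\<lambda>t. (cmod (Phi \<gamma> \<kappa> (2 * t + x) x L))^2 + (cmod (Phi \<gamma> \<kappa> (2 * t + x) x R))^2) \<longlonglongrightarrow>
        (cmod (complex_of_real \<Lambda> * complex_of_real rr ^ x))^2 + (cmod (- complex_of_real \<Lambda> * complex_of_real rr ^ (x - 1)))^2"
      using P False by (intro tendsto_intros) auto
    moreover have "(cmod (- complex_of_real \<Lambda> * complex_of_real rr ^ (x - 1)))^2 = \<Lambda>^2 * (rr^2)^(x - 1)"
      using nsq[of "x - 1"] by (simp only: mult_minus_left norm_minus_cancel)
    ultimately show ?thesis using False nsq[of x] by (simp add: Pw_def V_def algebra_simps)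
  qed
  have inact: "(\<lambda>t. Pw \<gamma> \<kappa> (2 * t + x + 1) x) \<longlonglongrightarrow> 0"
  proof -
    have hL: "(\<lambda>t. Phi \<gamma> \<kappa> (2 * t + x + 1) x L) \<longlonglongrightarrow> 0"
      and hR: "(\<lambda>t. Phi \<gamma> \<kappa> (2 * t + x + 1) x R) \<longlonglongrightarrow> 0" using P by auto
    have l1: "(\<lambda>t. (cmod (Phi \<gamma> \<kappa> (2 * t + x + 1) x L))^2) \<longlonglongrightarrow> (cmod 0)^2"
      by (intro tendsto_intros hL)
    have l2: "(\<lambda>t. (cmod (Phi \<gamma> \<kappa> (2 * t + x + 1) x L))^2 + (cmod (Phi \<gamma> \<kappa> (2 * t + x + 1) x R))^2) \<longlonglongrightarrow> (cmod 0)^2 + (cmod 0)^2"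
      by (intro tendsto_intros hL hR)
    show ?thesis
    proof (cases "x = 0")
      case True then show ?thesis using l1 by (simp add: Pw_def)
    next
      case False then show ?thesis using l2 by (simp add: Pw_def)
    qed
  qed
  show ?thesis
  proof (cases "even x")
    case True
    then obtain m where m: "x = 2 * m" by blast
    have "(\<lambda>t. Pw \<gamma> \<kappa> (2 * t) x) \<longlonglongrightarrow> V x"
      by (rule LIMSEQ_offset[where k = m]) (use act in \<open>simp add: m algebra_simps\<close>)
    moreover have "(\<lambda>t. Pw \<gamma> \<kappa> (2 * t + 1) x) \<longlonglongrightarrow> 0"
      by (rule LIMSEQ_offset[where k = m]) (use inact in \<open>simp add: m algebra_simps\<close>)
    ultimately show ?thesis using True by simp
  next
    case False
    then obtain m where m: "x = 2 * m + 1" using oddE by blast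
    have "(\<lambda>t. Pw \<gamma> \<kappa> (2 * t) x) \<longlonglongrightarrow> 0"
      by (rule LIMSEQ_offset[where k = "Suc m"]) (use inact in \<open>simp add: m algebra_simps\<close>)
    moreover have "(\<lambda>t. Pw \<gamma> \<kappa> (2 * t + 1) x) \<longlonglongrightarrow> V x"
      by (rule LIMSEQ_offset[where k = m]) (use act in \<open>simp add: m algebra_simps\<close>)
    ultimately show ?thesis using False by simp
  qed
qed

end


lemma qsum:
  fixes \<kappa> :: nat assumes k3: "\<kappa> \<ge> 3" and x: "x \<ge> 1"
  shows "(1 / (real \<kappa> - 1)) ^ x + (1 / (real \<kappa> - 1)) ^ (x - 1) = real \<kappa> * (1 / (real \<kappa> - 1)) ^ x"
proof -
  obtain y where y: "x = Suc y" using x by (cases x) auto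
  have k: "real \<kappa> - 1 > 0" using k3 by simp
  have "(1 / (real \<kappa> - 1)) ^ x + (1 / (real \<kappa> - 1)) ^ (x - 1) = (1 / (real \<kappa> - 1)) ^ y * (1 / (real \<kappa> - 1) + 1)"
    unfolding y by (simp add: algebra_simps)
  also have "1 / (real \<kappa> - 1) + 1 = real \<kappa> * (1 / (real \<kappa> - 1))" using k by (simp add: field_simps)
  finally show ?thesis unfolding y by (simp add: algebra_simps)
qed

theorem theorem1:
  fixes \<kappa> :: nat
  assumes "\<kappa> \<ge> 3"
  shows "(\<forall>x. (\<lambda>t. Pw 0 \<kappa> (2 * t) x) \<longlonglongrightarrow> 0 \<and> (\<lambda>t. Pw 0 \<kappa> (2 * t + 1) x) \<longlonglongrightarrow> 0)
       \<and> (\<forall>x. (\<lambda>t. Pw pi \<kappa> (2 * t) x) \<longlonglongrightarrow>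
               (if even x then ((real \<kappa> - 2) / (real \<kappa> - 1))\<^sup>2 *
                   ((if x = 0 then 1 else 0) + (if x = 0 then 0 else 1) * real \<kappa> * (1 / (real \<kappa> - 1)) ^ x)
                else 0))
       \<and> (\<forall>x. (\<lambda>t. Pw pi \<kappa> (2 * t + 1) x) \<longlonglongrightarrow>
               (if odd x then real \<kappa> * ((real \<kappa> - 2) / (real \<kappa> - 1))\<^sup>2 * (1 / (real \<kappa> - 1)) ^ x
                else 0))"
proof (intro conjI allI)
  fix x
  have A: "(\<lambda>t. Pw 0 \<kappa> (2 * t) x) \<longlonglongrightarrow> (if even x then (if x = 0 then (0::real)^2 else (0::real)^2 * ((rr \<kappa>^2)^x + (rr \<kappa>^2)^(x-1))) else 0)
       \<and> (\<lambda>t. Pw 0 \<kappa> (2 * t + 1) x) \<longlonglongrightarrow> (if odd x then (if x = 0 then (0::real)^2 else (0::real)^2 * ((rr \<kappa>^2)^x + (rr \<kappa>^2)^(x-1))) else 0)"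
    by (rule lims[OF assms, of 0 0]) simp
  moreover have "(if even x then (if x = 0 then (0::real)^2 else (0::real)^2 * ((rr \<kappa>^2)^x + (rr \<kappa>^2)^(x-1))) else 0) = 0"
    "(if odd x then (if x = 0 then (0::real)^2 else (0::real)^2 * ((rr \<kappa>^2)^x + (rr \<kappa>^2)^(x-1))) else 0) = 0"
    by simp_all
  ultimately show "(\<lambda>t. Pw 0 \<kappa> (2 * t) x) \<longlonglongrightarrow> 0" "(\<lambda>t. Pw 0 \<kappa> (2 * t + 1) x) \<longlonglongrightarrow> 0"
    by (simp only:)+
  define c where "c = (real \<kappa> - 2) / (real \<kappa> - 1)"
  have B: "(\<lambda>t. Pw pi \<kappa> (2 * t) x) \<longlonglongrightarrow> (if even x then (if x = 0 then c^2 else c^2 * ((rr \<kappa>^2)^x + (rr \<kappa>^2)^(x-1))) else 0)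
       \<and> (\<lambda>t. Pw pi \<kappa> (2 * t + 1) x) \<longlonglongrightarrow> (if odd x then (if x = 0 then c^2 else c^2 * ((rr \<kappa>^2)^x + (rr \<kappa>^2)^(x-1))) else 0)"
    by (rule lims[OF assms, of pi c]) (simp add: c_def)
  have V: "x \<ge> 1 \<Longrightarrow> c^2 * ((rr \<kappa>^2)^x + (rr \<kappa>^2)^(x-1)) = real \<kappa> * c^2 * (1 / (real \<kappa> - 1)) ^ x"
    using qsum[OF assms, of x] unfolding rr_sq[OF assms] by (simp add: algebra_simps)
  show "(\<lambda>t. Pw pi \<kappa> (2 * t) x) \<longlonglongrightarrow>
               (if even x then ((real \<kappa> - 2) / (real \<kappa> - 1))\<^sup>2 *
                   ((if x = 0 then 1 else 0) + (if x = 0 then 0 else 1) * real \<kappa> * (1 / (real \<kappa> - 1)) ^ x)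
                else 0)"
  proof -
    from B have B1: "(\<lambda>t. Pw pi \<kappa> (2 * t) x) \<longlonglongrightarrow> (if even x then (if x = 0 then c^2 else c^2 * ((rr \<kappa>^2)^x + (rr \<kappa>^2)^(x-1))) else 0)"
      by (rule conjunct1)
    have eq: "(if even x then (if x = 0 then c^2 else c^2 * ((rr \<kappa>^2)^x + (rr \<kappa>^2)^(x-1))) else 0)
       = (if even x then c\<^sup>2 * ((if x = 0 then 1 else 0) + (if x = 0 then 0 else 1) * real \<kappa> * (1 / (real \<kappa> - 1)) ^ x) else 0)"
      using V by (cases "x = 0") (simp_all add: algebra_simps)
    have "(\<lambda>t. Pw pi \<kappa> (2 * t) x) \<longlonglongrightarrow> (if even x then c\<^sup>2 * ((if x = 0 then 1 else 0) + (if x = 0 then 0 else 1) * real \<kappa> * (1 / (real \<kappa> - 1)) ^ x) else 0)"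
      using B1 by (simp only: eq)
    then show ?thesis unfolding c_def .
  qed
  show "(\<lambda>t. Pw pi \<kappa> (2 * t + 1) x) \<longlonglongrightarrow>
               (if odd x then real \<kappa> * ((real \<kappa> - 2) / (real \<kappa> - 1))\<^sup>2 * (1 / (real \<kappa> - 1)) ^ x
                else 0)"
  proof -
    from B have B2: "(\<lambda>t. Pw pi \<kappa> (2 * t + 1) x) \<longlonglongrightarrow> (if odd x then (if x = 0 then c^2 else c^2 * ((rr \<kappa>^2)^x + (rr \<kappa>^2)^(x-1))) else 0)"
      by (rule conjunct2)
    have eq: "(if odd x then (if x = 0 then c^2 else c^2 * ((rr \<kappa>^2)^x + (rr \<kappa>^2)^(x-1))) else 0)
       = (if odd x then real \<kappa> * c\<^sup>2 * (1 / (real \<kappa> - 1)) ^ x else 0)"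
      using V by (cases "x = 0") (simp_all add: algebra_simps)
    have "(\<lambda>t. Pw pi \<kappa> (2 * t + 1) x) \<longlonglongrightarrow> (if odd x then real \<kappa> * c\<^sup>2 * (1 / (real \<kappa> - 1)) ^ x else 0)"
      using B2 by (simp only: eq)
    then show ?thesis unfolding c_def .
  qed
qed


end
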